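(* Let $q\neq-1$ be real and $n\ge0$. Then $$U_n(x,s,q)=\sum_{k=0}^{\lfloor n/2\rfloor}q^{k^2}\begin{bmatrix} n-k\\ k\end{bmatrix}(1+q^{k+1})\cdots(1+q^{n-k})\,s^kx^{n-2k}.$$
   Context: $U_n(x,s,q)$ is defined by $U_{-1}=0$, $U_0=1$, $U_n(x,s,q)=(1+q^{n})x\,U_{n-1}(x,s,q)+q^{n-1}s\,U_{n-2}(x,s,q)$ for $n\ge1$. Notation: $[m]=1+q+\cdots+q^{m-1}$, $[m]!=[1]\cdots[m]$, $\begin{bmatrix} m\\ j\end{bmatrix}=\frac{[m]!}{[j]![m-j]!}$. Empty products equal $1$. *)

theory Defs
  imports Complex_Main
begin

fun U :: "nat \<Rightarrow> real \<Rightarrow> real \<Rightarrow> real \<Rightarrow> real" where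
  "U 0 x s q = 1"
| "U (Suc 0) x s q = (1 + q) * x"
| "U (Suc (Suc n)) x s q =
     (1 + q ^ (Suc (Suc n))) * x * U (Suc n) x s q + q ^ (Suc n) * s * U n x s q"

definition qint :: "real \<Rightarrow> nat \<Rightarrow> real" where
  "qint q m = (\<Sum>i<m. q ^ i)"

definition qfact :: "real \<Rightarrow> nat \<Rightarrow> real" where
  "qfact q m = (\<Prod>i=1..m. qint q i)"

definition qbinom :: "real \<Rightarrow> nat \<Rightarrow> nat \<Rightarrow> real" where
  "qbinom q m j = qfact q m / (qfact q j * qfact q (m - j))"

end

theory Submission imports Defs begin

lemma qint_mul: "(1 - q) * qint q n = 1 - q ^ n"
proof (induction n)
  case (Suc n)
  have "(1 - q) * qint q (Suc n) = (1 - q) * qint q n + (1-q) * q^n" by (simp add: qint_def distrib_left)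
  also have "\<dots> = 1 - q ^ Suc n" using Suc by (simp add: algebra_simps)
  finally show ?case .
qed (simp add: qint_def)

lemma qint_one: "qint 1 n = real n"
  by (simp add: qint_def)

lemma qint_nz: assumes "q \<noteq> -1" "n > 0" shows "qint q n \<noteq> 0"
proof
  assume h: "qint q n = 0"
  show False
  proof (cases "q = 1")
    case True then show False using h assms by (simp add: qint_one)
  next
    case False
    from qint_mul[of q n] h have "q ^ n = 1" by simp
    hence "\<bar>q\<bar> ^ n = 1 ^ n" by (metis power_abs abs_one power_one)
    hence "\<bar>q\<bar> = 1" using assms(2) by (subst (asm) power_eq_iff_eq_base) auto
    thus False using False assms(1) by (auto simp: abs_if split: if_splits)
  qed
qed

lemma qfact_nz: assumes "q \<noteq> -1" shows "qfact q n \<noteq> 0"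
  using qint_nz[OF assms] by (simp add: qfact_def)

lemma qfact_Suc: "qfact q (Suc n) = qfact q n * qint q (Suc n)"
  by (simp add: qfact_def)

lemma qint_id: "qint q (i+r+2) * (1 + q^(i+r+2)) = (1 + q^(2*i+r+3)) * qint q (r+1) + q^(r+1) * (1 + q^(i+1)) * qint q (i+1)"
proof (cases "q = 1")
  case True then show ?thesis by (simp add: qint_one)
next
  case False
  have "(1-q) * (qint q (i+r+2) * (1 + q^(i+r+2))) = (1-q) * ((1 + q^(2*i+r+3)) * qint q (r+1) + q^(r+1) * (1 + q^(i+1)) * qint q (i+1))"
  proof -
    have "(1-q) * (qint q (i+r+2) * (1 + q^(i+r+2))) = (1 - q^(i+r+2)) * (1 + q^(i+r+2))"
      by (subst mult.assoc[symmetric], subst qint_mul, rule refl)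
    also have "\<dots> = (1 + q^(2*i+r+3)) * (1 - q^(r+1)) + q^(r+1) * (1 + q^(i+1)) * (1 - q^(i+1))"
    proof -
      have e1: "q^(i+r+2) = q^(i+1) * q^(r+1)" by (simp add: power_add[symmetric])
      have e2: "q^(2*i+r+3) = q^(i+1) * q^(i+1) * q^(r+1)" 
        proof -
          have "2*i+r+3 = (i+1)+(i+1)+(r+1)" by simp
          thus ?thesis by (simp only: power_add)
        qed
      show ?thesis unfolding e1 e2 by (simp add: algebra_simps)
    qed
    also have "\<dots> = (1-q) * ((1 + q^(2*i+r+3)) * qint q (r+1) + q^(r+1) * (1 + q^(i+1)) * qint q (i+1))"
      by (simp only: qint_mul[symmetric]) (simp add: algebra_simps)
    finally show ?thesis .
  qed
  thus ?thesis using False by simp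
qed

definition cc :: "real \<Rightarrow> nat \<Rightarrow> nat \<Rightarrow> real" where
  "cc q n k = q ^ (k^2) * qbinom q (n - k) k * (\<Prod>i=k+1..n-k. (1 + q ^ i))"

lemma cc_main:
  assumes q: "q \<noteq> -1"
  shows "cc q (2*i+r+3) (i+1) = (1 + q^(2*i+r+3)) * cc q (2*i+r+2) (i+1) + q^(2*i+r+2) * cc q (2*i+r+1) i"
proof -
  define Fa where "Fa = qfact q (i+r+1)"
  define Fi where "Fi = qfact q i"
  define Fr where "Fr = qfact q r"
  define P2 where "P2 = (\<Prod>k=i+2..i+r+1. (1 + q ^ k))"
  define K where "K = q^((i+1)^2) * Fa * P2 / (Fi * Fr * qint q (i+1) * qint q (r+1))"
  have nz: "Fi \<noteq> 0" "Fr \<noteq> 0" "qint q (i+1) \<noteq> 0" "qint q (r+1) \<noteq> 0"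
    using qfact_nz[OF q] qint_nz[OF q] by (auto simp: Fi_def Fr_def)
  have A: "qbinom q (2*i+r+3 - (i+1)) (i+1) = Fa * qint q (i+r+2) / (Fi * qint q (i+1) * (Fr * qint q (r+1)))"
  proof -
    have "2*i+r+3 - (i+1) = Suc (i+r+1)" "Suc (i+r+1) - (i+1) = Suc r" by simp_all
    thus ?thesis unfolding qbinom_def Fa_def Fi_def Fr_def
      by (simp only: qfact_Suc) (simp add: qfact_Suc add.commute add.left_commute)
  qed
  have B: "qbinom q (2*i+r+2 - (i+1)) (i+1) = Fa / (Fi * qint q (i+1) * Fr)"
  proof -
    have "2*i+r+2 - (i+1) = i+r+1" "i+r+1 - (i+1) = r" by simp_all
    thus ?thesis unfolding qbinom_def Fa_def Fi_def Fr_def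
      by (simp only: qfact_Suc) (simp add: qfact_Suc add.commute add.left_commute)
  qed
  have C: "qbinom q (2*i+r+1 - i) i = Fa / (Fi * (Fr * qint q (r+1)))"
  proof -
    have "2*i+r+1 - i = i+r+1" "i+r+1 - i = Suc r" by simp_all
    thus ?thesis unfolding qbinom_def Fa_def Fi_def Fr_def
      by (simp only: qfact_Suc) (simp add: qfact_Suc add.commute add.left_commute)
  qed
  have P1: "(\<Prod>k=i+1+1..2*i+r+3-(i+1). (1 + q ^ k)) = P2 * (1 + q^(i+r+2))"
  proof -
    have "2*i+r+3-(i+1) = Suc (i+r+1)" by simp
    thus ?thesis unfolding P2_def by (simp add: prod.nat_ivl_Suc')
  qed
  have P2': "(\<Prod>k=i+1+1..2*i+r+2-(i+1). (1 + q ^ k)) = P2"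
  proof -
    have "2*i+r+2-(i+1) = i+r+1" by simp
    thus ?thesis unfolding P2_def by simp
  qed
  have P3: "(\<Prod>k=i+1..2*i+r+1-i. (1 + q ^ k)) = (1 + q^(i+1)) * P2"
  proof -
    have "2*i+r+1-i = i+r+1" by simp
    moreover have "{i+1..i+r+1} = insert (i+1) {i+2..i+r+1}" by auto
    ultimately show ?thesis unfolding P2_def by simp
  qed
  have pw: "q^(2*i+r+2) * q^(i^2) = q^((i+1)^2) * q^(r+1)"
  proof -
    have "2*i+r+2 + i^2 = (i+1)^2 + (r+1)" by (simp add: power2_eq_square)
    thus ?thesis by (simp only: power_add[symmetric])
  qed
  have L: "cc q (2*i+r+3) (i+1) = K * (qint q (i+r+2) * (1 + q^(i+r+2)))"
    unfolding cc_def A P1 K_def using nz by (simp add: field_simps)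
  have R: "(1 + q^(2*i+r+3)) * cc q (2*i+r+2) (i+1) + q^(2*i+r+2) * cc q (2*i+r+1) i
      = K * ((1 + q^(2*i+r+3)) * qint q (r+1) + q^(r+1) * (1 + q^(i+1)) * qint q (i+1))"
  proof -
    have "q^(2*i+r+2) * cc q (2*i+r+1) i = (q^(2*i+r+2) * q^(i^2)) * (Fa / (Fi * (Fr * qint q (r+1)))) * ((1 + q^(i+1)) * P2)"
      unfolding cc_def C P3 by (simp add: mult_ac)
    also have "\<dots> = K * (q^(r+1) * (1 + q^(i+1)) * qint q (i+1))"
      unfolding pw K_def using nz by (simp add: field_simps)
    finally have e: "q^(2*i+r+2) * cc q (2*i+r+1) i = K * (q^(r+1) * (1 + q^(i+1)) * qint q (i+1))" .
    have "(1 + q^(2*i+r+3)) * cc q (2*i+r+2) (i+1) = K * ((1 + q^(2*i+r+3)) * qint q (r+1))"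
      unfolding cc_def B P2' K_def using nz by (simp add: field_simps)
    with e show ?thesis by (simp add: distrib_left)
  qed
  show ?thesis unfolding L R qint_id ..
qed

definition ff :: "real \<Rightarrow> real \<Rightarrow> real \<Rightarrow> nat \<Rightarrow> nat \<Rightarrow> real" where
  "ff q x s n k = (if 2*k \<le> n then cc q n k * s^k * x^(n-2*k) else 0)"

lemma qbinom_diag: "q \<noteq> -1 \<Longrightarrow> qbinom q m m = 1"
proof -
  assume "q \<noteq> -1"
  hence "qfact q m \<noteq> 0" by (rule qfact_nz)
  moreover have "qfact q 0 = 1" by (simp add: qfact_def)
  ultimately show ?thesis by (simp add: qbinom_def)
qed

lemma qbinom_0: "q \<noteq> -1 \<Longrightarrow> qbinom q m 0 = 1"
proof -
  assume "q \<noteq> -1"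
  hence "qfact q m \<noteq> 0" by (rule qfact_nz)
  moreover have "qfact q 0 = 1" by (simp add: qfact_def)
  ultimately show ?thesis by (simp add: qbinom_def)
qed

lemma ff_zero: "q \<noteq> -1 \<Longrightarrow> ff q x s (n+2) 0 = (1 + q^(n+2)) * x * ff q x s (n+1) 0"
proof -
  have "(\<Prod>i=1..n+2. (1 + q ^ i)) = (\<Prod>i=1..n+1. (1 + q ^ i)) * (1 + q^(n+2))"
    by (simp add: prod.nat_ivl_Suc')
  moreover assume "q \<noteq> -1"
  ultimately show ?thesis by (simp add: ff_def cc_def qbinom_0 numeral_2_eq_2 mult_ac)
qed

lemma ff_step:
  assumes q: "q \<noteq> -1"
  shows "ff q x s (n+2) (Suc k) = (1 + q^(n+2)) * x * ff q x s (n+1) (Suc k) + q^(n+1) * s * ff q x s n k"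
proof -
  consider "n < 2*k" | "n = 2*k" | "2*k < n" by linarith
  then show ?thesis
  proof cases
    case 1 then show ?thesis by (simp add: ff_def)
  next
    case 2
    have a: "cc q (n+2) (Suc k) = q^((k+1)^2)"
      using 2 by (simp add: cc_def qbinom_diag[OF q])
    have b: "cc q n k = q^(k^2)"
      using 2 by (simp add: cc_def qbinom_diag[OF q])
    have c: "q^((k+1)^2) = q^(n+1) * q^(k^2)"
    proof -
      have "(k+1)^2 = (n+1) + k^2" using 2 by (simp add: power2_eq_square)
      thus ?thesis by (simp only: power_add)
    qed
    have d: "ff q x s (n+2) (Suc k) = cc q (n+2) (Suc k) * s^(k+1)" using 2 by (simp add: ff_def)
    have e: "ff q x s (n+1) (Suc k) = 0" using 2 by (simp add: ff_def)
    have f: "ff q x s n k = cc q n k * s^k" using 2 by (simp add: ff_def)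
    show ?thesis unfolding d e f a b c by simp
  next
    case 3
    then obtain r where r: "n = 2*k + r + 1" by (metis add.commute add_Suc less_iff_Suc_add add.assoc Suc_eq_plus1)
    have m: "cc q (2*k+r+3) (k+1) = (1 + q^(2*k+r+3)) * cc q (2*k+r+2) (k+1) + q^(2*k+r+2) * cc q (2*k+r+1) k"
      by (rule cc_main[OF q])
    have e1: "n+2 = 2*k+r+3" "n+1 = 2*k+r+2" using r by simp_all
    have "ff q x s (n+2) (Suc k) = cc q (2*k+r+3) (k+1) * s^(k+1) * x^(r+1)"
      unfolding ff_def e1 by simp
    moreover have "ff q x s (n+1) (Suc k) = cc q (2*k+r+2) (k+1) * s^(k+1) * x^r"
      unfolding ff_def e1 by simp
    moreover have "ff q x s n k = cc q (2*k+r+1) k * s^k * x^(r+1)"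
      unfolding ff_def r by simp
    ultimately show ?thesis unfolding m e1 by (simp add: algebra_simps)
  qed
qed

definition VV where "VV q x s n M = (\<Sum>k\<le>M. ff q x s n k)"

lemma VV_ext: assumes "n div 2 \<le> M" shows "VV q x s n M = VV q x s n (n div 2)"
  unfolding VV_def
  by (rule sum.mono_neutral_right) (use assms in \<open>auto simp: ff_def\<close>)

lemma U_VV: assumes q: "q \<noteq> -1" shows "U n x s q = VV q x s n n"
  using q
proof (induction n x s q rule: U.induct)
  case (1 x s q) note q = 1 show ?case using q by (simp add: VV_def ff_def cc_def qbinom_0)
next
  case (2 x s q) note q = 2 show ?case using q by (simp add: VV_def ff_def cc_def qbinom_0)
next
  case (3 n x s q)
  note q = 3(3)
  have "VV q x s (n+2) (n+2) = ff q x s (n+2) 0 + (\<Sum>k\<le>n+1. ff q x s (n+2) (Suc k))"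
    unfolding VV_def by (simp add: sum.atMost_Suc_shift del: sum.atMost_Suc)
  also have "\<dots> = (1 + q^(n+2)) * x * (ff q x s (n+1) 0 + (\<Sum>k\<le>n+1. ff q x s (n+1) (Suc k)))
       + q^(n+1) * s * (\<Sum>k\<le>n+1. ff q x s n k)"
  proof -
    have "(\<Sum>k\<le>n+1. ff q x s (n+2) (Suc k)) = (\<Sum>k\<le>n+1. (1 + q^(n+2)) * x * ff q x s (n+1) (Suc k) + q^(n+1) * s * ff q x s n k)"
      by (rule sum.cong) (simp_all only: ff_step[OF q])
    also have "\<dots> = (1 + q^(n+2)) * x * (\<Sum>k\<le>n+1. ff q x s (n+1) (Suc k)) + q^(n+1) * s * (\<Sum>k\<le>n+1. ff q x s n k)"
      by (simp only: sum.distrib sum_distrib_left)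
    finally show ?thesis by (simp only: ff_zero[OF q] distrib_left add.assoc)
  qed
  also have "\<dots> = (1 + q^(n+2)) * x * VV q x s (n+1) (n+2) + q^(n+1) * s * VV q x s n (n+1)"
    unfolding VV_def by (simp add: sum.atMost_Suc_shift del: sum.atMost_Suc)
  also have "VV q x s (n+1) (n+2) = VV q x s (n+1) (n+1)"
    using VV_ext[of "n+1" "n+2"] VV_ext[of "n+1" "n+1"] by simp
  also have "VV q x s n (n+1) = VV q x s n n"
    using VV_ext[of "n" "n+1"] VV_ext[of "n" "n"] by simp
  finally show ?case using 3(1,2)[OF q] by (simp add: numeral_2_eq_2)
qed


theorem theorem2p3:
  fixes q x s :: real and n :: nat
  assumes "q \<noteq> -1"
  shows "U n x s q =
    (\<Sum>k=0..n div 2. q ^ (k^2) * qbinom q (n - k) k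
        * (\<Prod>i=k+1..n-k. (1 + q ^ i)) * s ^ k * x ^ (n - 2*k))"
proof -
  have "U n x s q = VV q x s n (n div 2)"
    using U_VV[OF assms] VV_ext[of n n] by simp
  also have "\<dots> = (\<Sum>k=0..n div 2. ff q x s n k)"
    unfolding VV_def by (simp add: atLeast0AtMost)
  also have "\<dots> = (\<Sum>k=0..n div 2. q ^ (k^2) * qbinom q (n - k) k
        * (\<Prod>i=k+1..n-k. (1 + q ^ i)) * s ^ k * x ^ (n - 2*k))"
    by (rule sum.cong) (auto simp: ff_def cc_def)
  finally show ?thesis .
qed

end
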